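(* Let $n\ge1$, let $p(x_1,\dots,x_n)=\prod_{i<j}(x_i+x_j)$, and let $\Gamma$ be the $n\times n$ matrix with entries $\Gamma_{ij}=B(\phi_i,\phi_j)$, $0\le i,j\le n-1$. Then $\det\Gamma=c\,p^2x_1\cdots x_n$ for some non-zero constant $c\in\mathbb C$.
   Context: $U(\mathfrak h_n)$ is the associative superalgebra generated by odd elements $\xi_1,\dots,\xi_n$ subject to $\xi_i\xi_j+\xi_j\xi_i=0$ for $i\neq j$; $x_i=\xi_i^2$ are central. Let $W_1$ be the free $\mathbb C[x_1,\dots,x_n]$-submodule of $U(\mathfrak h_n)$ with basis $\xi_1,\dots,\xi_n$, with the $\mathbb C[x_1,\dots,x_n]$-valued symmetric bilinear form $B(a,b)=[a,b]=ab+ba$. Let $T$ be the $\mathbb C[x_1,\dots,x_n]$-linear endomorphism of $W_1$ with $T(\xi_j)=\sum_i t_{ij}\xi_i$, where $t_{ii}=0$, $t_{ij}=x_j$ for $i<j$, $t_{ij}=-x_j$ for $i>j$. Set $\phi_0=\sum_{i}\xi_i$ and $\phi_k=T^k(\phi_0)$. *)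

theory Defs
  imports Complex_Main "Jordan_Normal_Form.Determinant"
begin

text \<open>Elements of W_1 are represented by their coefficient vectors a (index i < n,
  0-based, i.e. index i stands for xi_(i+1)) with entries in C[x_1..x_n]; polynomials are
  represented by their evaluations at an arbitrary point x : nat => complex
  (x i stands for x_(i+1)). Polynomial identities over C are equivalent to identities
  of the evaluations at all points.\<close>

text \<open>B(a,b) = ab + ba for a = sum a_i xi_i, b = sum b_i xi_i; since
  xi_i xi_j + xi_j xi_i = 0 for i ~= j and = 2 xi_i^2 = 2 x_i for i = j,
  B(a,b) = sum_i 2 x_i a_i b_i.\<close>
definition Bform :: "(nat \<Rightarrow> complex) \<Rightarrow> nat \<Rightarrow> (nat \<Rightarrow> complex) \<Rightarrow> (nat \<Rightarrow> complex) \<Rightarrow> complex" where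
  "Bform x n a b = (\<Sum>i<n. 2 * x i * a i * b i)"

definition tcoef :: "(nat \<Rightarrow> complex) \<Rightarrow> nat \<Rightarrow> nat \<Rightarrow> complex" where
  "tcoef x i j = (if i = j then 0 else if i < j then x j else - x j)"

text \<open>T(xi_j) = sum_i t_ij xi_i, hence (T a)_i = sum_j t_ij a_j.\<close>
definition Tmap :: "(nat \<Rightarrow> complex) \<Rightarrow> nat \<Rightarrow> (nat \<Rightarrow> complex) \<Rightarrow> (nat \<Rightarrow> complex)" where
  "Tmap x n a = (\<lambda>i. if i < n then (\<Sum>j<n. tcoef x i j * a j) else 0)"

definition phi0 :: "nat \<Rightarrow> nat \<Rightarrow> complex" where
  "phi0 n = (\<lambda>i. if i < n then 1 else 0)"

definition phi :: "(nat \<Rightarrow> complex) \<Rightarrow> nat \<Rightarrow> nat \<Rightarrow> (nat \<Rightarrow> complex)" where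
  "phi x n k = (Tmap x n ^^ k) (phi0 n)"

definition Gamma :: "(nat \<Rightarrow> complex) \<Rightarrow> nat \<Rightarrow> complex mat" where
  "Gamma x n = mat n n (\<lambda>(i, j). Bform x n (phi x n i) (phi x n j))"

definition ppoly :: "(nat \<Rightarrow> complex) \<Rightarrow> nat \<Rightarrow> complex" where
  "ppoly x n = (\<Prod>j<n. \<Prod>i<j. (x i + x j))"

end

theory Submission
  imports Defs
begin


definition fpol :: "(nat \<Rightarrow> complex) \<Rightarrow> nat \<Rightarrow> nat \<Rightarrow> complex poly" where
  "fpol x n i = (\<Prod>k<i. [:- x k, 1:]) * (\<Prod>k\<in>{i<..<n}. [:x k, 1:])"

lemma pCons0_mult: "pCons 0 (p::complex poly) = [:0,1:] * p"
  by (simp add: mult_pCons_left)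

lemma smult_cm: "smult c p = [:c:] * p"
  by simp

lemma lin_split: "[:c, 1:] = [:c:] + [:0, 1::'a::comm_ring_1:]"
  by simp

lemma fpol_pair:
  assumes "Suc i < n"
  shows "pCons 0 (fpol x n i - fpol x n (Suc i)) =
         smult (x i) (fpol x n i) + smult (x (Suc i)) (fpol x n (Suc i))"
proof -
  define A where "A = (\<Prod>k<i. [:- x k, 1:])"
  define B where "B = (\<Prod>k\<in>{Suc i<..<n}. [:x k, 1:])"
  have e1: "{i<..<n} = insert (Suc i) {Suc i<..<n}" using assms by auto
  have f1: "fpol x n i = A * ([:x (Suc i), 1:] * B)"
    unfolding fpol_def A_def B_def e1 by simp
  have f2: "fpol x n (Suc i) = ([:- x i, 1:] * A) * B"
    unfolding fpol_def A_def B_def by (simp add: lessThan_Suc mult.commute)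
  have r: "\<And>X A B a b :: complex poly. X * (A * ((b + X) * B) - (- a + X) * A * B) = a * (A*((b+X)*B)) + b*((-a+X)*A*B)"
    by (simp add: algebra_simps)
  have l1: "[:x (Suc i), 1:] = [:x (Suc i):] + [:0,1:]" by simp
  have l2: "[:- x i, 1:] = - [:x i:] + [:0,1:]" by simp
  show ?thesis apply (subst pCons0_mult) apply (subst (1 2) smult_cm)
    unfolding f1 f2 l1 l2 by (rule r)
qed

definition Gs :: "(nat \<Rightarrow> complex) \<Rightarrow> nat \<Rightarrow> nat \<Rightarrow> complex poly" where
  "Gs x n i = (\<Sum>j<n. smult (tcoef x i j) (fpol x n j)) - pCons 0 (fpol x n i)"

definition cpol :: "(nat \<Rightarrow> complex) \<Rightarrow> nat \<Rightarrow> complex poly" where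
  "cpol x n = Gs x n 0"

lemma tdiff_sum:
  assumes "Suc i < n"
  shows "(\<Sum>j<n. smult (tcoef x i j - tcoef x (Suc i) j) (fpol x n j)) =
         smult (x i) (fpol x n i) + smult (x (Suc i)) (fpol x n (Suc i))"
proof -
  have pw: "smult (tcoef x i j - tcoef x (Suc i) j) (fpol x n j) =
     (if j = i then smult (x i) (fpol x n i) else 0) + (if j = Suc i then smult (x (Suc i)) (fpol x n (Suc i)) else 0)" for j
    unfolding tcoef_def by auto
  show ?thesis unfolding pw sum.distrib using assms by simp
qed

lemma Gs_Suc:
  assumes "Suc i < n"
  shows "Gs x n (Suc i) = Gs x n i"
proof -
  have "Gs x n i - Gs x n (Suc i) =
     (\<Sum>j<n. smult (tcoef x i j - tcoef x (Suc i) j) (fpol x n j)) - pCons 0 (fpol x n i - fpol x n (Suc i))"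
    unfolding Gs_def smult_diff_left sum_subtractf by simp
  also have "\<dots> = 0" unfolding tdiff_sum[OF assms] fpol_pair[OF assms] by simp
  finally show ?thesis by simp
qed

lemma Gs_const: "i < n \<Longrightarrow> Gs x n i = cpol x n"
  unfolding cpol_def
proof (induction i)
  case 0 then show ?case by simp
next
  case (Suc i) then show ?case using Gs_Suc[of i n x] by simp
qed

lemma coeff_T:
  assumes "i < n"
  shows "(\<Sum>j<n. tcoef x i j * coeff (fpol x n j) m) = coeff (pCons 0 (fpol x n i)) m + coeff (cpol x n) m"
proof -
  have "coeff (Gs x n i) m = coeff (cpol x n) m" using Gs_const[OF assms] by simp
  then show ?thesis unfolding Gs_def coeff_diff coeff_sum coeff_smult by (simp add: algebra_simps)
qed

lemma fpol_deg:
  assumes "i < n"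
  shows "degree (fpol x n i) = n - 1 \<and> coeff (fpol x n i) (n - 1) = 1"
proof -
  define A where "A = (\<Prod>k<i. [:- x k, 1:])"
  define B where "B = (\<Prod>k\<in>{i<..<n}. [:x k, 1:])"
  have dA: "degree A = i" unfolding A_def by (subst degree_prod_eq_sum_degree) auto
  have dB: "degree B = n - 1 - i" unfolding B_def by (subst degree_prod_eq_sum_degree) auto
  have lA: "lead_coeff A = 1" unfolding A_def lead_coeff_prod by simp
  have lB: "lead_coeff B = 1" unfolding B_def lead_coeff_prod by simp
  have nz: "A \<noteq> 0" "B \<noteq> 0" using lA lB by auto
  have d: "degree (A * B) = n - 1" using dA dB nz assms by (simp add: degree_mult_eq)
  have l: "lead_coeff (A * B) = 1" using lA lB by (simp add: lead_coeff_mult)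
  show ?thesis using d l unfolding fpol_def A_def[symmetric] B_def[symmetric] by simp
qed

definition Vv :: "(nat \<Rightarrow> complex) \<Rightarrow> nat \<Rightarrow> nat \<Rightarrow> nat \<Rightarrow> complex" where
  "Vv x n m = (\<lambda>i. if i < n then coeff (fpol x n i) m else 0)"

lemma T_V: "Tmap x n (Vv x n (Suc m)) = (\<lambda>i. Vv x n m i + coeff (cpol x n) (Suc m) * phi0 n i)"
proof
  fix i
  show "Tmap x n (Vv x n (Suc m)) i = Vv x n m i + coeff (cpol x n) (Suc m) * phi0 n i"
  proof (cases "i < n")
    case True
    have "Tmap x n (Vv x n (Suc m)) i = (\<Sum>j<n. tcoef x i j * coeff (fpol x n j) (Suc m))"
      unfolding Tmap_def Vv_def using True by (auto intro!: sum.cong)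
    also have "\<dots> = coeff (fpol x n i) m + coeff (cpol x n) (Suc m)"
      unfolding coeff_T[OF True] by simp
    finally show ?thesis using True unfolding Vv_def phi0_def by simp
  next
    case False
    then show ?thesis unfolding Tmap_def Vv_def phi0_def by simp
  qed
qed

lemma V_top: "Vv x n (n - 1) = phi0 n"
  unfolding Vv_def phi0_def using fpol_deg by auto

lemma Tmap_lin:
  assumes "finite S"
  shows "Tmap x n (\<lambda>i. a i + (\<Sum>j\<in>S. u j * v j i)) = (\<lambda>i. Tmap x n a i + (\<Sum>j\<in>S. u j * Tmap x n (v j) i))"
proof
  fix i
  show "Tmap x n (\<lambda>i. a i + (\<Sum>j\<in>S. u j * v j i)) i = Tmap x n a i + (\<Sum>j\<in>S. u j * Tmap x n (v j) i)"
  proof (cases "i < n")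
    case True
    have "(\<Sum>l<n. tcoef x i l * (a l + (\<Sum>j\<in>S. u j * v j l))) =
          (\<Sum>l<n. tcoef x i l * a l) + (\<Sum>l<n. \<Sum>j\<in>S. u j * (tcoef x i l * v j l))"
      by (simp add: distrib_left sum.distrib sum_distrib_left algebra_simps)
    also have "\<dots> = (\<Sum>l<n. tcoef x i l * a l) + (\<Sum>j\<in>S. u j * (\<Sum>l<n. tcoef x i l * v j l))"
      by (subst sum.swap) (simp add: sum_distrib_left)
    finally show ?thesis unfolding Tmap_def using True by simp
  next
    case False
    then show ?thesis unfolding Tmap_def by simp
  qed
qed

lemma phi_Suc: "phi x n (Suc k) = Tmap x n (phi x n k)"
  unfolding phi_def by simp

lemma krylov:
  assumes "k < n"
  shows "\<exists>u. phi x n k = (\<lambda>i. Vv x n (n - 1 - k) i + (\<Sum>j<k. u j * Vv x n (n - 1 - j) i))"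
  using assms
proof (induction k)
  case 0
  then show ?case using V_top unfolding phi_def by auto
next
  case (Suc k)
  then obtain u where u: "phi x n k = (\<lambda>i. Vv x n (n - 1 - k) i + (\<Sum>j<k. u j * Vv x n (n - 1 - j) i))"
    by auto
  define c where "c = (\<lambda>m. coeff (cpol x n) m)"
  define u' where "u' = (\<lambda>j. if j = 0 then c (n - 1 - k) + (\<Sum>j<k. u j * c (n - 1 - j)) else u (j - 1))"
  have e1: "n - 1 - k = Suc (n - 1 - Suc k)" using Suc.prems by simp
  have e2: "j < k \<Longrightarrow> n - 1 - j = Suc (n - 1 - Suc j)" for j using Suc.prems by simp
  have "phi x n (Suc k) = (\<lambda>i. Tmap x n (Vv x n (n - 1 - k)) i + (\<Sum>j<k. u j * Tmap x n (Vv x n (n - 1 - j)) i))"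
    unfolding phi_Suc u by (rule Tmap_lin) simp
  also have "\<dots> = (\<lambda>i. (Vv x n (n - 1 - Suc k) i + c (n - 1 - k) * phi0 n i) +
         (\<Sum>j<k. u j * (Vv x n (n - 1 - Suc j) i + c (n - 1 - j) * phi0 n i)))"
  proof -
    have tj: "Tmap x n (Vv x n (n - 1 - j)) i = Vv x n (n - 1 - Suc j) i + c (n - 1 - j) * phi0 n i" if "j < k" for i j
    proof -
      have "Tmap x n (Vv x n (n - 1 - j)) i = Tmap x n (Vv x n (Suc (n - 1 - Suc j))) i"
        using e2[OF that] by metis
      also have "\<dots> = Vv x n (n - 1 - Suc j) i + c (Suc (n - 1 - Suc j)) * phi0 n i"
        unfolding T_V c_def by simp
      finally show ?thesis using e2[OF that] by metis
    qed
    have "(\<Sum>j<k. u j * Tmap x n (Vv x n (n - 1 - j)) i) = (\<Sum>j<k. u j * (Vv x n (n - 1 - Suc j) i + c (n - 1 - j) * phi0 n i))" for i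
      by (rule sum.cong[OF refl], subst tj) auto
    then show ?thesis unfolding e1 T_V c_def by (simp add: e1[symmetric])
  qed
  also have "\<dots> = (\<lambda>i. Vv x n (n - 1 - Suc k) i + (\<Sum>j<Suc k. u' j * Vv x n (n - 1 - j) i))"
  proof
    fix i
    have "(\<Sum>j<Suc k. u' j * Vv x n (n - 1 - j) i) = u' 0 * Vv x n (n - 1) i + (\<Sum>j<k. u' (Suc j) * Vv x n (n - 1 - Suc j) i)"
      by (subst sum.lessThan_Suc_shift) simp
    also have "\<dots> = (c (n - 1 - k) + (\<Sum>j<k. u j * c (n - 1 - j))) * phi0 n i + (\<Sum>j<k. u j * Vv x n (n - 1 - Suc j) i)"
      unfolding V_top u'_def by simp
    finally show "(Vv x n (n - 1 - Suc k) i + c (n - 1 - k) * phi0 n i) +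
         (\<Sum>j<k. u j * (Vv x n (n - 1 - Suc j) i + c (n - 1 - j) * phi0 n i)) =
         Vv x n (n - 1 - Suc k) i + (\<Sum>j<Suc k. u' j * Vv x n (n - 1 - j) i)"
      by (simp add: distrib_left sum.distrib sum_distrib_left algebra_simps)
  qed
  finally show ?case by blast
qed



lemma expand_rev:
  fixes p :: "complex poly"
  assumes "degree p < n \<or> p = 0"
  shows "(\<Sum>m<n. monom (coeff p (n - Suc m)) (n - Suc m)) = p"
proof -
  have "(\<Sum>m<n. monom (coeff p (n - Suc m)) (n - Suc m)) = (\<Sum>m<n. monom (coeff p m) m)"
    by (rule sum.nat_diff_reindex)
  also have "\<dots> = p"
  proof (cases "p = 0")
    case True then show ?thesis by simp
  next
    case False
    then have d: "degree p < n" using assms by auto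
    then obtain n' where n': "n = Suc n'" by (cases n) auto
    have "{..<n} = {..n'}" using n' by auto
    then show ?thesis using poly_as_sum_of_monoms'[of p n'] d n' by simp
  qed
  finally show ?thesis .
qed

lemma fpol_Suc_lt: "i < n \<Longrightarrow> fpol x (Suc n) i = fpol x n i * [:x n, 1:]"
proof -
  assume i: "i < n"
  have "{i<..<Suc n} = insert n {i<..<n}" using i by auto
  then show ?thesis unfolding fpol_def by (simp add: algebra_simps)
qed

lemma fpol_Suc_last: "fpol x (Suc n) n = (\<Prod>k<n. [:- x k, 1:])"
proof -
  have "{n<..<Suc n} = {}" by auto
  then show ?thesis unfolding fpol_def by simp
qed

lemma coeff_b_diag: "coeff (monom 1 k * [:a, 1:]) (Suc k) = (1::complex)"
  by (simp add: coeff_monom_mult)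

lemma degree_b: "degree (monom 1 k * [:a, 1::complex:]) = Suc k"
  using degree_mult_eq[of "monom 1 k" "[:a, 1::complex:]"] by (simp add: degree_monom_eq)

definition Wmat :: "(nat \<Rightarrow> complex) \<Rightarrow> nat \<Rightarrow> complex mat" where
  "Wmat x n = mat n n (\<lambda>(i, j). coeff (fpol x n i) (n - 1 - j))"

lemma det_W_step:
  "det (Wmat x (Suc n)) = poly (\<Prod>k<n. [:- x k, 1:]) (- x n) * det (Wmat x n)"
proof -
  define a where "a = x n"
  define h where "h = (\<Prod>k<n. [:- x k, 1:])"
  define q where "q = synthetic_div h (- a)"
  define r where "r = poly h (- a)"
  have hqr: "h = [:a, 1:] * q + [:r:]"
    using synthetic_div_correct'[of "- a" h] unfolding q_def r_def by simp
  have dh: "degree h = n" unfolding h_def by (subst degree_prod_eq_sum_degree) auto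
  have dq: "degree q < n \<or> q = 0"
  proof (cases n)
    case 0 then have "h = 1" unfolding h_def by simp
    then have "q = 0" unfolding q_def by (simp add: one_pCons)
    then show ?thesis by simp
  next
    case (Suc n') then show ?thesis unfolding q_def degree_synthetic_div dh by simp
  qed
  define b where "b = (\<lambda>m. if m < n then monom 1 (n - Suc m) * [:a, 1:] else (1::complex poly))"
  define E where "E = mat (Suc n) (Suc n) (\<lambda>(m, j). coeff (b m) (n - j))"
  define N where "N = mat (Suc n) (Suc n) (\<lambda>(i, m). if i < n then (if m < n then coeff (fpol x n i) (n - Suc m) else 0)
       else (if m < n then coeff q (n - Suc m) else r))"
  have Ec: "E \<in> carrier_mat (Suc n) (Suc n)" unfolding E_def by simp
  have Nc: "N \<in> carrier_mat (Suc n) (Suc n)" unfolding N_def by simp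
  have sumrep: "(\<Sum>m<n. smult (coeff p (n - Suc m)) (monom 1 (n - Suc m) * [:a, 1:])) = p * [:a, 1:]"
    if "degree p < n \<or> p = 0" for p
  proof -
    have "(\<Sum>m<n. smult (coeff p (n - Suc m)) (monom 1 (n - Suc m) * [:a, 1:])) =
          (\<Sum>m<n. monom (coeff p (n - Suc m)) (n - Suc m)) * [:a, 1:]"
    proof -
      have pw: "smult c (monom 1 k * [:a, 1:]) = monom c k * [:a, 1:]" for c k
        by (metis mult_smult_left smult_monom mult.right_neutral)
      show ?thesis unfolding pw sum_distrib_right by simp
    qed
    then show ?thesis using expand_rev[OF that] by simp
  qed
  have P: "fpol x (Suc n) i = (\<Sum>m<Suc n. smult (N $$ (i, m)) (b m))" if i: "i < Suc n" for i
  proof (cases "i < n")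
    case True
    have "(\<Sum>m<Suc n. smult (N $$ (i, m)) (b m)) = (\<Sum>m<n. smult (coeff (fpol x n i) (n - Suc m)) (monom 1 (n - Suc m) * [:a, 1:]))"
      unfolding lessThan_Suc using True by (simp add: N_def b_def)
    also have "\<dots> = fpol x n i * [:a, 1:]"
      by (rule sumrep) (use fpol_deg[OF True, of x] True in auto)
    finally show ?thesis unfolding fpol_Suc_lt[OF True] a_def by simp
  next
    case False
    then have iN: "i = n" using i by simp
    have "(\<Sum>m<Suc n. smult (N $$ (i, m)) (b m)) = (\<Sum>m<n. smult (coeff q (n - Suc m)) (monom 1 (n - Suc m) * [:a, 1:])) + [:r:]"
      unfolding lessThan_Suc using iN by (simp add: N_def b_def)
    also have "\<dots> = h" unfolding sumrep[OF dq] hqr by (simp add: mult.commute)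
    finally show ?thesis unfolding iN fpol_Suc_last h_def by simp
  qed
  have WNE: "Wmat x (Suc n) = N * E"
  proof (rule eq_matI)
    fix i j assume i: "i < dim_row (N * E)" and j: "j < dim_col (N * E)"
    then have i': "i < Suc n" and j': "j < Suc n" using Nc Ec by auto
    have "(N * E) $$ (i, j) = (\<Sum>m\<in>{0..<Suc n}. N $$ (i, m) * coeff (b m) (n - j))"
      using i' j' Nc Ec unfolding E_def by (simp add: scalar_prod_def)
    also have "\<dots> = coeff (\<Sum>m<Suc n. smult (N $$ (i, m)) (b m)) (n - j)"
      by (simp add: coeff_sum atLeast0LessThan)
    also have "\<dots> = coeff (fpol x (Suc n) i) (n - j)" using P[OF i'] by simp
    finally show "Wmat x (Suc n) $$ (i, j) = (N * E) $$ (i, j)" unfolding Wmat_def using i' j' by simp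
  qed (use Nc Ec in \<open>auto simp: Wmat_def\<close>)
  have dE: "det E = 1"
  proof -
    have "upper_triangular E" unfolding upper_triangular_def
    proof (intro allI impI)
      fix m j assume m: "m < dim_row E" and j: "j < m"
      have "degree (b m) = n - m"
      proof (cases "m < n")
        case True
        then have "n - m = Suc (n - Suc m)" by simp
        then show ?thesis unfolding b_def using True degree_b[of "n - Suc m" a] by simp
      next
        case False then show ?thesis using m Ec unfolding b_def by simp
      qed
      then show "E $$ (m, j) = 0" using m j Ec unfolding E_def by (auto intro!: coeff_eq_0)
    qed
    moreover have "prod_list (diag_mat E) = 1"
    proof -
      have Ed: "E $$ (m, m) = 1" if m: "m < Suc n" for m
      proof (cases "m < n")
        case True
        then have "n - m = Suc (n - Suc m)" by simp
        then show ?thesis using True m unfolding E_def b_def by (simp add: coeff_b_diag)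
      next
        case False then show ?thesis using m unfolding E_def b_def by simp
      qed
      have "diag_mat E = map (\<lambda>i. 1) [0..<Suc n]" unfolding diag_mat_def
        by (rule map_cong) (use Ec Ed in \<open>auto simp del: upt_Suc\<close>)
      then show ?thesis by (simp add: prod.distinct_set_conv_list[symmetric])
    qed
    ultimately show ?thesis using det_upper_triangular[OF _ Ec] by simp
  qed
  define R where "R = mat 1 n (\<lambda>(i, m). coeff q (n - Suc m))"
  have N4: "N = four_block_mat (Wmat x n) (0\<^sub>m n 1) R (mat 1 1 (\<lambda>_. r))"
    by (rule eq_matI) (auto simp: N_def Wmat_def R_def four_block_mat_def Let_def)
  have d1: "det (mat 1 1 (\<lambda>_. r)) = r"
  proof -
    have "upper_triangular (mat 1 1 (\<lambda>_. r))" unfolding upper_triangular_def by auto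
    moreover have "diag_mat (mat 1 1 (\<lambda>_. r)) = [r]" unfolding diag_mat_def by simp
    ultimately show ?thesis using det_upper_triangular[of "mat 1 1 (\<lambda>_. r)" 1] by simp
  qed
  have dN: "det N = det (Wmat x n) * r"
  proof -
    have Wc: "Wmat x n \<in> carrier_mat n n" unfolding Wmat_def by simp
    have Rc: "R \<in> carrier_mat 1 n" unfolding R_def by simp
    have Mc: "mat 1 1 (\<lambda>_. r) \<in> carrier_mat 1 1" by simp
    show ?thesis unfolding N4 det_four_block_mat_upper_right_zero_col[OF Wc refl Rc Mc] d1 ..
  qed
  show ?thesis unfolding WNE det_mult[OF Nc Ec] dE dN r_def h_def a_def by simp
qed



definition Kmat :: "(nat \<Rightarrow> complex) \<Rightarrow> nat \<Rightarrow> complex mat" where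
  "Kmat x n = mat n n (\<lambda>(i, k). phi x n k i)"


lemma sum_tri:
  fixes g a :: "nat \<Rightarrow> complex"
  assumes "k < n"
  shows "(\<Sum>j\<in>{0..<n}. g j * (if j = k then 1 else if j < k then a j else 0)) = g k + (\<Sum>j<k. a j * g j)"
proof -
  have pw: "g j * (if j = k then 1 else if j < k then a j else 0) =
     (if j = k then g k else 0) + (if j \<in> {..<k} then a j * g j else 0)" for j
    by (auto simp: mult.commute)
  have "{0..<n} \<inter> {..<k} = {..<k}" using assms by auto
  moreover have "(\<Sum>j\<in>{0..<n}. if j \<in> {..<k} then a j * g j else 0) = (\<Sum>j\<in>{0..<n} \<inter> {..<k}. a j * g j)"
    by (rule sum.inter_restrict[symmetric]) simp
  ultimately show ?thesis unfolding pw sum.distrib using assms by simp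
qed

lemma det_K_W: "det (Kmat x n) = det (Wmat x n)"
proof -
  have "\<forall>k. \<exists>u. k < n \<longrightarrow> phi x n k = (\<lambda>i. Vv x n (n - 1 - k) i + (\<Sum>j<k. u j * Vv x n (n - 1 - j) i))"
    using krylov by blast
  then obtain U where U: "\<And>k. k < n \<Longrightarrow> phi x n k = (\<lambda>i. Vv x n (n - 1 - k) i + (\<Sum>j<k. U k j * Vv x n (n - 1 - j) i))"
    by metis
  define Um where "Um = mat n n (\<lambda>(j, k). if j = k then 1 else if j < k then U k j else (0::complex))"
  have Uc: "Um \<in> carrier_mat n n" unfolding Um_def by simp
  have Wc: "Wmat x n \<in> carrier_mat n n" unfolding Wmat_def by simp
  have "upper_triangular Um" unfolding Um_def upper_triangular_def by auto
  moreover have "prod_list (diag_mat Um) = 1"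
  proof -
    have "diag_mat Um = map (\<lambda>i. 1) [0..<n]" unfolding Um_def diag_mat_def by (rule map_cong) auto
    then show ?thesis by (simp add: prod.distinct_set_conv_list[symmetric])
  qed
  ultimately have dU: "det Um = 1" using det_upper_triangular[OF _ Uc] by simp
  have KW: "Kmat x n = Wmat x n * Um"
  proof (rule eq_matI)
    fix i k assume i: "i < dim_row (Wmat x n * Um)" and k: "k < dim_col (Wmat x n * Um)"
    then have i': "i < n" and k': "k < n" using Uc Wc by auto
    have "(Wmat x n * Um) $$ (i, k) = (\<Sum>j\<in>{0..<n}. Vv x n (n - 1 - j) i * (if j = k then 1 else if j < k then U k j else 0))"
      using i' k' unfolding Wmat_def Um_def Vv_def by (simp add: scalar_prod_def)
    also have "\<dots> = phi x n k i" unfolding sum_tri[OF k'] U[OF k'] by simp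
    finally show "Kmat x n $$ (i, k) = (Wmat x n * Um) $$ (i, k)" unfolding Kmat_def using i' k' by simp
  qed (use Uc Wc in \<open>auto simp: Kmat_def\<close>)
  show ?thesis unfolding KW det_mult[OF Wc Uc] dU by simp
qed

lemma det_Gamma: "det (Gamma x n) = (\<Prod>i<n. 2 * x i) * det (Kmat x n) ^ 2"
proof -
  define D where "D = mat n n (\<lambda>(i, j). if i = j then 2 * x i else (0::complex))"
  have Dc: "D \<in> carrier_mat n n" unfolding D_def by simp
  have Kc: "Kmat x n \<in> carrier_mat n n" unfolding Kmat_def by simp
  have "upper_triangular D" unfolding D_def upper_triangular_def by auto
  moreover have "prod_list (diag_mat D) = (\<Prod>i<n. 2 * x i)"
  proof -
    have "diag_mat D = map (\<lambda>i. 2 * x i) [0..<n]" unfolding D_def diag_mat_def by (rule map_cong) auto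
    then show ?thesis by (simp add: prod.distinct_set_conv_list[symmetric] atLeast0LessThan)
  qed
  ultimately have dD: "det D = (\<Prod>i<n. 2 * x i)" using det_upper_triangular[OF _ Dc] by simp
  have G: "Gamma x n = transpose_mat (Kmat x n) * (D * Kmat x n)"
  proof (rule eq_matI)
    fix a b assume a: "a < dim_row (transpose_mat (Kmat x n) * (D * Kmat x n))"
      and b: "b < dim_col (transpose_mat (Kmat x n) * (D * Kmat x n))"
    then have a': "a < n" and b': "b < n" using Kc Dc by auto
    have inner: "(\<Sum>l\<in>{0..<n}. (if i = l then 2 * x i else 0) * phi x n b l) = 2 * x i * phi x n b i" if "i < n" for i
    proof -
      have "(\<Sum>l\<in>{0..<n}. (if i = l then 2 * x i else 0) * phi x n b l) = (\<Sum>l\<in>{0..<n}. if i = l then 2 * x i * phi x n b i else 0)"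
        by (rule sum.cong) auto
      then show ?thesis using that by simp
    qed
    have "(transpose_mat (Kmat x n) * (D * Kmat x n)) $$ (a, b) =
       (\<Sum>i\<in>{0..<n}. phi x n a i * (\<Sum>l\<in>{0..<n}. (if i = l then 2 * x i else 0) * phi x n b l))"
      using a' b' unfolding Kmat_def D_def by (simp add: scalar_prod_def)
    also have "\<dots> = (\<Sum>i\<in>{0..<n}. 2 * x i * phi x n a i * phi x n b i)"
      by (rule sum.cong) (auto simp: inner)
    finally show "Gamma x n $$ (a, b) = (transpose_mat (Kmat x n) * (D * Kmat x n)) $$ (a, b)"
      unfolding Gamma_def Bform_def using a' b' by (simp add: atLeast0LessThan)
  qed (use Kc Dc in \<open>auto simp: Gamma_def\<close>)
  have "det (Gamma x n) = det (Kmat x n) * (det D * det (Kmat x n))"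
    unfolding G by (metis Dc Kc det_mult det_transpose mult_carrier_mat transpose_carrier_mat)
  then show ?thesis unfolding dD by (simp add: power2_eq_square)
qed


lemma prod_neg: "(\<Prod>k<n. - (f k :: complex)) = (-1) ^ n * (\<Prod>k<n. f k)"
  by (induction n) auto

lemma poly_h:
  fixes x :: "nat \<Rightarrow> complex"
  shows "poly (\<Prod>k<n. [:- x k, 1:]) (- x n) = (-1) ^ n * (\<Prod>k<n. x k + x n)"
proof -
  have "poly (\<Prod>k<n. [:- x k, 1:]) (- x n) = (\<Prod>k<n. - (x k + x n))"
    unfolding poly_prod by (rule prod.cong) simp_all
  then show ?thesis unfolding prod_neg .
qed

lemma det_W: "\<exists>s::complex. s \<noteq> 0 \<and> (\<forall>x. det (Wmat x n) = s * ppoly x n)"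
proof (induction n)
  case 0
  have "det (Wmat x 0) = 1" for x by (rule det_dim_zero) (simp add: Wmat_def)
  then show ?case by (intro exI[of _ 1]) (simp add: ppoly_def)
next
  case (Suc n)
  then obtain s :: complex where s: "s \<noteq> 0" "\<And>x. det (Wmat x n) = s * ppoly x n" by auto
  have "det (Wmat x (Suc n)) = ((-1) ^ n * s) * ppoly x (Suc n)" for x
    unfolding det_W_step poly_h s(2) ppoly_def by (simp add: algebra_simps)
  then show ?case using s(1) by (intro exI[of _ "(-1) ^ n * s"]) simp
qed

theorem lemma3p2:
  fixes n :: nat
  assumes "n \<ge> 1"
  shows "\<exists>c :: complex. c \<noteq> 0 \<and>
           (\<forall>x :: nat \<Rightarrow> complex. det (Gamma x n) = c * (ppoly x n)^2 * (\<Prod>i<n. x i))"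
proof -
  obtain s :: complex where s: "s \<noteq> 0" "\<And>x. det (Wmat x n) = s * ppoly x n" using det_W by blast
  have "det (Gamma x n) = (2 ^ n * s ^ 2) * (ppoly x n)^2 * (\<Prod>i<n. x i)" for x
    unfolding det_Gamma det_K_W s(2) by (simp add: prod.distrib power_mult_distrib algebra_simps)
  then show ?thesis using s(1) by (intro exI[of _ "2 ^ n * s ^ 2"]) simp
qed

end
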